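(* For every reward-mean vector $\boldsymbol{\mu}$ with a unique best arm and every cost-mean vector $\boldsymbol{c}\in[\ell,1]^K$, the map $(\boldsymbol{\mu}',\boldsymbol{c}')\mapsto\boldsymbol{w}^*(\boldsymbol{\mu}',\boldsymbol{c}')$ is continuous at $(\boldsymbol{\mu},\boldsymbol{c})$.
   Context: Rewards belong to a one-parameter natural exponential family $\{h(x)\exp(\theta_\mu x-b(\theta_\mu))\}$ parametrized by the mean, with $b$ convex and twice differentiable; $d$ is the KL divergence between family members. $\ell>0$ is a fixed constant. For reward means $\boldsymbol{\mu}'$ with unique best arm $a^*(\boldsymbol{\mu}')$ and positive cost means $\boldsymbol{c}'$, $\boldsymbol{w}^*(\boldsymbol{\mu}',\boldsymbol{c}')$ is the maximizer over the probability simplex $\Sigma_K$ of $\inf_{\boldsymbol{\lambda}:a^*(\boldsymbol{\lambda})\neq a^*(\boldsymbol{\mu}')}\sum_a\frac{w_a}{c'_a}d(\mu'_a,\lambda_a)$. *)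

theory Defs
  imports "HOL-Analysis.Analysis"
begin

text \<open>One-parameter natural exponential family with log-partition function b on the
  natural parameter interval Theta, parametrized by the mean mu = b'(theta).\<close>

definition nef :: "real set \<Rightarrow> (real \<Rightarrow> real) \<Rightarrow> bool" where
  "nef Th b \<longleftrightarrow> open Th \<and> is_interval Th \<and> Th \<noteq> {} \<and> convex_on Th b \<and>
     (\<forall>t\<in>Th. b differentiable (at t) \<and> deriv b differentiable (at t)) \<and>
     inj_on (deriv b) Th"

definition nef_means :: "real set \<Rightarrow> (real \<Rightarrow> real) \<Rightarrow> real set" where
  "nef_means Th b = deriv b ` Th"

definition nef_theta :: "real set \<Rightarrow> (real \<Rightarrow> real) \<Rightarrow> real \<Rightarrow> real" where
  "nef_theta Th b m = inv_into Th (deriv b) m"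

text \<open>KL divergence d(x,y) = KL(P_x || P_y) between family members with means x, y.\<close>
definition nef_kl :: "real set \<Rightarrow> (real \<Rightarrow> real) \<Rightarrow> real \<Rightarrow> real \<Rightarrow> real" where
  "nef_kl Th b x y =
     (nef_theta Th b x - nef_theta Th b y) * x - b (nef_theta Th b x) + b (nef_theta Th b y)"

definition unique_best :: "real^'k \<Rightarrow> 'k \<Rightarrow> bool" where
  "unique_best m a \<longleftrightarrow> (\<forall>j. j \<noteq> a \<longrightarrow> m $ j < m $ a)"

definition has_unique_best :: "real^'k \<Rightarrow> bool" where
  "has_unique_best m \<longleftrightarrow> (\<exists>a. unique_best m a)"

definition best_arm :: "real^'k \<Rightarrow> 'k" where
  "best_arm m = (THE a. unique_best m a)"

definition alt_set :: "real set \<Rightarrow> (real \<Rightarrow> real) \<Rightarrow> real^'k \<Rightarrow> (real^'k) set" where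
  "alt_set Th b m = {l. (\<forall>a. l $ a \<in> nef_means Th b) \<and> \<not> unique_best l (best_arm m)}"

definition prob_simplex :: "(real^'k) set" where
  "prob_simplex = {w. (\<forall>a. 0 \<le> w $ a) \<and> (\<Sum>a\<in>UNIV. w $ a) = 1}"

definition objective :: "real set \<Rightarrow> (real \<Rightarrow> real) \<Rightarrow> real^'k \<Rightarrow> real^'k \<Rightarrow> real^'k \<Rightarrow> real" where
  "objective Th b m c w =
     Inf ((\<lambda>l. \<Sum>a\<in>UNIV. w $ a / c $ a * nef_kl Th b (m $ a) (l $ a)) ` alt_set Th b m)"

definition wstar :: "real set \<Rightarrow> (real \<Rightarrow> real) \<Rightarrow> real^'k::finite \<Rightarrow> real^'k \<Rightarrow> real^'k" where
  "wstar Th b m c = (SOME w. w \<in> prob_simplex \<and>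
       (\<forall>v\<in>prob_simplex. objective Th b m c v \<le> objective Th b m c w))"

end

theory Submission
  imports Defs
begin



locale nefl =
  fixes Th :: "real set" and b :: "real \<Rightarrow> real"
  assumes nef: "nef Th b"
begin

abbreviation "M \<equiv> nef_means Th b"
abbreviation "T \<equiv> nef_theta Th b"
abbreviation "kl \<equiv> nef_kl Th b"

lemma Th_open: "open Th" and Th_int: "is_interval Th" and Th_ne: "Th \<noteq> {}"
  and b_conv: "convex_on Th b" and b_diff: "\<And>t. t \<in> Th \<Longrightarrow> b differentiable (at t)"
  and g_diff: "\<And>t. t \<in> Th \<Longrightarrow> deriv b differentiable (at t)"
  and g_inj: "inj_on (deriv b) Th"
  using nef unfolding nef_def by auto

lemma b_deriv: "t \<in> Th \<Longrightarrow> (b has_real_derivative deriv b t) (at t)"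
  using b_diff DERIV_deriv_iff_real_differentiable by blast

lemma b_isCont: "t \<in> Th \<Longrightarrow> isCont b t"
  using b_deriv DERIV_isCont by blast

lemma g_isCont: "t \<in> Th \<Longrightarrow> isCont (deriv b) t"
  using g_diff differentiable_imp_continuous_within by blast

lemma tangent: assumes "s \<in> Th" "t \<in> Th" shows "b t - b s \<ge> deriv b s * (t - s)"
proof -
  have "connected Th" using Th_int is_interval_connected by blast
  moreover have "interior Th = Th" using Th_open interior_open by blast
  moreover have "(b has_real_derivative deriv b s) (at s within Th)"
    using b_deriv[OF assms(1)] has_field_derivative_at_within by blast
  ultimately show ?thesis
    using convex_on_imp_above_tangent[OF b_conv, of s t "deriv b s"] assms by auto
qed

lemma g_mono: assumes "s \<in> Th" "t \<in> Th" "s \<le> t" shows "deriv b s \<le> deriv b t"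
proof -
  have "b t - b s \<ge> deriv b s * (t - s)" "b s - b t \<ge> deriv b t * (s - t)"
    using tangent assms by auto
  then have "(deriv b t - deriv b s) * (t - s) \<ge> 0" by (simp add: algebra_simps)
  then show ?thesis using assms(3)
    by (cases "s = t") (auto simp: zero_le_mult_iff)
qed

lemma T_in: "y \<in> M \<Longrightarrow> T y \<in> Th"
  unfolding nef_means_def nef_theta_def by (simp add: inv_into_into)

lemma g_T: "y \<in> M \<Longrightarrow> deriv b (T y) = y"
  unfolding nef_means_def nef_theta_def by (simp add: f_inv_into_f)

lemma T_g: "t \<in> Th \<Longrightarrow> T (deriv b t) = t"
  unfolding nef_theta_def using g_inj by (simp add: inv_into_f_f)

lemma g_in: "t \<in> Th \<Longrightarrow> deriv b t \<in> M"
  unfolding nef_means_def by simp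

lemma T_less: assumes "x \<in> M" "y \<in> M" "x < y" shows "T x < T y"
proof (rule ccontr)
  assume "\<not> T x < T y"
  then have "deriv b (T y) \<le> deriv b (T x)" using g_mono T_in assms by auto
  then show False using g_T assms by auto
qed

lemma T_le: assumes "x \<in> M" "y \<in> M" "x \<le> y" shows "T x \<le> T y"
  using T_less[OF assms(1,2)] assms(3) by (cases "x = y") auto

lemma M_interval: assumes "x \<in> M" "z \<in> M" "x \<le> y" "y \<le> z" shows "y \<in> M"
proof -
  have "continuous_on Th (deriv b)" using g_isCont continuous_at_imp_continuous_on by blast
  then have "connected M" unfolding nef_means_def
    using connected_continuous_image Th_int is_interval_connected by blast
  then have "is_interval M" using is_interval_connected_1 by blast
  then show ?thesis using assms unfolding is_interval_1 by blast
qed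

lemma kl_self: "kl x x = 0" unfolding nef_kl_def by simp

lemma kl_three: "kl x z = kl x y + kl y z + (T y - T z) * (x - y)"
  unfolding nef_kl_def by (simp add: algebra_simps)

lemma kl_nonneg: assumes "x \<in> M" "y \<in> M" shows "kl x y \<ge> 0"
proof -
  have "b (T y) - b (T x) \<ge> deriv b (T x) * (T y - T x)"
    using tangent T_in assms by blast
  then show ?thesis unfolding nef_kl_def using g_T[OF assms(1)] by (simp add: algebra_simps)
qed

lemma kl_pos: assumes "x \<in> M" "y \<in> M" "x \<noteq> y" shows "kl x y > 0"
proof -
  define z where "z = (x + y) / 2"
  have zM: "z \<in> M" using M_interval[of x y z] M_interval[of y x z] assms
    unfolding z_def by (cases "x \<le> y") auto
  have e: "kl x y = kl x z + kl z y + (T z - T y) * (x - z)" by (rule kl_three)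
  have "(T z - T y) * (x - z) > 0"
  proof (cases "x < y")
    case True
    then have "z < y" "x < z" unfolding z_def by auto
    then have "T z < T y" using T_less zM assms by blast
    then show ?thesis using \<open>x < z\<close> by (simp add: mult_neg_neg)
  next
    case False
    then have "y < z" "z < x" using assms(3) unfolding z_def by auto
    then have "T y < T z" using T_less zM assms by blast
    then show ?thesis using \<open>z < x\<close> by simp
  qed
  moreover have "kl x z \<ge> 0" "kl z y \<ge> 0" using kl_nonneg zM assms by auto
  ultimately show ?thesis using e by linarith
qed

lemma kl_zero_iff: "x \<in> M \<Longrightarrow> y \<in> M \<Longrightarrow> kl x y \<le> 0 \<Longrightarrow> x = y"
  using kl_pos by force

lemma kl_mono_up: assumes "x \<in> M" "y \<in> M" "z \<in> M" "x \<le> y" "y \<le> z"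
  shows "kl x y \<le> kl x z"
proof -
  have "T y \<le> T z" using T_le assms by blast
  then have "(T y - T z) * (x - y) \<ge> 0" using assms by (simp add: mult_nonpos_nonpos)
  moreover have "kl y z \<ge> 0" using kl_nonneg assms by blast
  ultimately show ?thesis using kl_three[of x z y] by linarith
qed

lemma kl_mono_down: assumes "x \<in> M" "y \<in> M" "z \<in> M" "z \<le> y" "y \<le> x"
  shows "kl x y \<le> kl x z"
proof -
  have "T z \<le> T y" using T_le assms by blast
  then have "(T y - T z) * (x - y) \<ge> 0" using assms by simp
  moreover have "kl y z \<ge> 0" using kl_nonneg assms by blast
  ultimately show ?thesis using kl_three[of x z y] by linarith
qed

lemma T_tendsto: assumes "y \<in> M" "\<forall>n. ys n \<in> M" "ys \<longlonglongrightarrow> y"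
  shows "(\<lambda>n. T (ys n)) \<longlonglongrightarrow> T y"
proof (rule tendstoI)
  fix e :: real assume e: "e > 0"
  obtain d where d: "d > 0" "ball (T y) d \<subseteq> Th" using Th_open T_in[OF assms(1)] openE by blast
  define r where "r = min e d / 2"
  have r: "r > 0" "r < e" "r < d" using e d unfolding r_def by auto
  have lo: "T y - r \<in> Th" and hi: "T y + r \<in> Th" using d r by (auto simp: dist_real_def)
  have "deriv b (T y - r) \<le> deriv b (T y)" using g_mono lo T_in assms(1) r by auto
  moreover have "deriv b (T y - r) \<noteq> deriv b (T y)"
    using g_inj lo T_in[OF assms(1)] r inj_onD by fastforce
  ultimately have l1: "deriv b (T y - r) < y" using g_T assms(1) by auto
  have "deriv b (T y) \<le> deriv b (T y + r)" using g_mono hi T_in assms(1) r by auto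
  moreover have "deriv b (T y + r) \<noteq> deriv b (T y)"
    using g_inj hi T_in[OF assms(1)] r inj_onD by fastforce
  ultimately have l2: "y < deriv b (T y + r)" using g_T assms(1) by auto
  have ev1: "eventually (\<lambda>n. deriv b (T y - r) < ys n) sequentially"
    using order_tendstoD(1)[OF assms(3) l1] .
  have ev2: "eventually (\<lambda>n. ys n < deriv b (T y + r)) sequentially"
    using order_tendstoD(2)[OF assms(3) l2] .
  show "eventually (\<lambda>n. dist (T (ys n)) (T y) < e) sequentially"
    using ev1 ev2
  proof eventually_elim
    case (elim n)
    have m1: "deriv b (T y - r) \<in> M" "deriv b (T y + r) \<in> M" using g_in lo hi by auto
    have "T (deriv b (T y - r)) < T (ys n)" using T_less[OF m1(1) assms(2)[rule_format, of n] elim(1)] .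
    then have A: "T y - r < T (ys n)" using T_g lo by simp
    have "T (ys n) < T (deriv b (T y + r))" using T_less[OF assms(2)[rule_format, of n] m1(2) elim(2)] .
    then have B: "T (ys n) < T y + r" using T_g hi by simp
    show ?case using A B r by (simp add: dist_real_def abs_less_iff)
  qed
qed

lemma kl_tendsto: assumes "x \<in> M" "y \<in> M" "\<forall>n. xs n \<in> M" "\<forall>n. ys n \<in> M"
  "xs \<longlonglongrightarrow> x" "ys \<longlonglongrightarrow> y"
  shows "(\<lambda>n. kl (xs n) (ys n)) \<longlonglongrightarrow> kl x y"
proof -
  have tx: "(\<lambda>n. T (xs n)) \<longlonglongrightarrow> T x" using T_tendsto assms by blast
  have ty: "(\<lambda>n. T (ys n)) \<longlonglongrightarrow> T y" using T_tendsto assms by blast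
  have bx: "(\<lambda>n. b (T (xs n))) \<longlonglongrightarrow> b (T x)"
    using isCont_tendsto_compose[OF b_isCont[OF T_in[OF assms(1)]] tx] .
  have by': "(\<lambda>n. b (T (ys n))) \<longlonglongrightarrow> b (T y)"
    using isCont_tendsto_compose[OF b_isCont[OF T_in[OF assms(2)]] ty] .
  show ?thesis unfolding nef_kl_def
    by (intro tendsto_intros tx ty bx by' assms(5))
qed

end



context nefl
begin

definition ybar :: "real \<Rightarrow> real \<Rightarrow> real \<Rightarrow> real \<Rightarrow> real" where "ybar p q x z = (p*x + q*z)/(p+q)"
definition "Hval p q x z = p * kl x (ybar p q x z) + q * kl z (ybar p q x z)"
definition "Sf m c w l = (\<Sum>i\<in>UNIV. w$i / c$i * kl (m$i) (l$i))"

lemma ybar_M: assumes "p \<ge> 0" "q \<ge> 0" "p + q > 0" "x \<in> M" "z \<in> M"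
  shows "ybar p q x z \<in> M"
proof -
  have A: "min x z \<le> ybar p q x z"
  proof -
    have "(p+q) * min x z \<le> p*x + q*z" using assms
      by (simp add: distrib_right add_mono mult_left_mono)
    then show ?thesis unfolding ybar_def using assms by (simp add: pos_le_divide_eq mult.commute)
  qed
  have B: "ybar p q x z \<le> max x z"
  proof -
    have "p*x + q*z \<le> (p+q) * max x z" using assms
      by (simp add: distrib_right add_mono mult_left_mono)
    then show ?thesis unfolding ybar_def using assms by (simp add: pos_divide_le_eq mult.commute)
  qed
  show ?thesis
  proof (cases "x \<le> z")
    case True then show ?thesis using M_interval[of x z] A B assms by auto
  next
    case False then show ?thesis using M_interval[of z x] A B assms by auto
  qed
qed

lemma comp_alg:
  fixes p q x z Y A B C D bA bB bC bD :: real
  assumes "(p+q)*Y = p*x+q*z"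
  shows "p*((A-B)*x - bA + bB) + q*((C - B)*z - bC + bB) =
         p*((A-D)*x - bA + bD) + q*((C-D)*z - bC + bD) + (p+q)*((D-B)*Y - bD + bB)"
proof -
  have "(p+q)*((D-B)*Y - bD + bB) = (D-B)*((p+q)*Y) - (p+q)*bD + (p+q)*bB"
    by (simp add: algebra_simps)
  also have "\<dots> = (D-B)*(p*x+q*z) - (p+q)*bD + (p+q)*bB" using assms by simp
  finally show ?thesis by (simp add: algebra_simps)
qed

lemma compensation: assumes "p + q \<noteq> 0"
  shows "p * kl x y + q * kl z y = Hval p q x z + (p+q) * kl (ybar p q x z) y"
proof -
  have "(p+q) * ybar p q x z = p*x+q*z" unfolding ybar_def using assms by simp
  then show ?thesis unfolding Hval_def nef_kl_def by (rule comp_alg)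
qed

lemma Hval_le: assumes "p \<ge> 0" "q \<ge> 0" "x \<in> M" "z \<in> M" "y \<in> M"
  shows "Hval p q x z \<le> p * kl x y + q * kl z y"
proof (cases "p + q = 0")
  case True
  then have "p = 0" "q = 0" using assms by auto
  then show ?thesis unfolding Hval_def by simp
next
  case False
  then have "p + q > 0" using assms by auto
  then have "kl (ybar p q x z) y \<ge> 0" using kl_nonneg ybar_M assms by blast
  then show ?thesis using compensation[OF False, of x y z] \<open>p+q>0\<close>
    by (simp add: mult_nonneg_nonneg)
qed

lemma Hval_nonneg: assumes "p \<ge> 0" "q \<ge> 0" "x \<in> M" "z \<in> M"
  shows "Hval p q x z \<ge> 0"
proof (cases "p + q = 0")
  case True
  then have "p = 0" "q = 0" using assms by auto
  then show ?thesis unfolding Hval_def by simp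
next
  case False
  then have "ybar p q x z \<in> M" using ybar_M assms by auto
  then show ?thesis unfolding Hval_def using kl_nonneg assms by (simp add: mult_nonneg_nonneg)
qed

lemma Hval_pos: assumes "p > 0" "q > 0" "x \<in> M" "z \<in> M" "z < x"
  shows "Hval p q x z > 0"
proof -
  have yM: "ybar p q x z \<in> M" using ybar_M assms by auto
  have "p*x + q*z < (p+q)*x" using assms by (simp add: distrib_right)
  then have "ybar p q x z < x" unfolding ybar_def using assms by (simp add: pos_divide_less_eq mult.commute)
  then have "kl x (ybar p q x z) > 0" using kl_pos yM assms by auto
  moreover have "kl z (ybar p q x z) \<ge> 0" using kl_nonneg yM assms by auto
  ultimately show ?thesis unfolding Hval_def using assms
    by (simp add: add_pos_nonneg mult_nonneg_nonneg)
qed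

lemma ybar_scale: assumes "r \<noteq> 0" shows "ybar (r*p) (r*q) x z = ybar p q x z"
proof -
  have "r*p*x + r*q*z = r*(p*x+q*z)" "r*p+r*q = r*(p+q)" by (simp_all add: distrib_left mult.assoc)
  then show ?thesis unfolding ybar_def using assms by simp
qed

lemma Hval_scale: assumes "r \<noteq> 0" shows "Hval (r*p) (r*q) x z = r * Hval p q x z"
  unfolding Hval_def ybar_scale[OF assms] by (simp add: algebra_simps)

lemma Hval_mono: assumes "0 \<le> P'" "P' \<le> P" "0 \<le> Q" "x \<in> M" "z \<in> M"
  shows "Hval P' Q x z \<le> Hval P Q x z"
proof (cases "P + Q = 0")
  case True
  then have "P = 0" "Q = 0" "P' = 0" using assms by auto
  then show ?thesis by simp
next
  case False
  then have yM: "ybar P Q x z \<in> M" using ybar_M assms by auto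
  have "Hval P' Q x z \<le> P' * kl x (ybar P Q x z) + Q * kl z (ybar P Q x z)"
    using Hval_le assms yM by auto
  also have "\<dots> \<le> Hval P Q x z" unfolding Hval_def
    using kl_nonneg[OF assms(4) yM] assms by (simp add: mult_right_mono)
  finally show ?thesis .
qed

lemma ybar_eq: assumes "p > 0" "q > 0" "p' > 0" "q' > 0" "x \<noteq> z"
  "ybar p q x z = ybar p' q' x z"
  shows "q * p' = q' * p"
proof -
  have "p+q \<noteq> 0" "p'+q' \<noteq> 0" using assms(1-4) by linarith+
  then have "(p*x+q*z)*(p'+q') = (p'*x+q'*z)*(p+q)" using assms(6)
    unfolding ybar_def by (simp add: frac_eq_eq)
  then have "(p*q' - q*p') * (x - z) = 0" by (simp add: algebra_simps)
  then have "p*q' - q*p' = 0" using assms(5) by simp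
  then show ?thesis by (simp add: algebra_simps)
qed

lemma Hval_tendsto:
  assumes "p > 0" "q > 0" "x \<in> M" "z \<in> M" "\<forall>n. ps n \<ge> 0" "\<forall>n. qs n \<ge> 0"
    "\<forall>n. xs n \<in> M" "\<forall>n. zs n \<in> M"
    "ps \<longlonglongrightarrow> p" "qs \<longlonglongrightarrow> q" "xs \<longlonglongrightarrow> x" "zs \<longlonglongrightarrow> z"
  shows "(\<lambda>n. Hval (ps n) (qs n) (xs n) (zs n)) \<longlonglongrightarrow> Hval p q x z"
proof -
  have yb: "(\<lambda>n. ybar (ps n) (qs n) (xs n) (zs n)) \<longlonglongrightarrow> ybar p q x z"
    unfolding ybar_def using assms by (intro tendsto_intros) auto
  have ev: "eventually (\<lambda>n. ps n > 0) sequentially" using order_tendstoD(1)[OF assms(9) assms(1)] .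
  define ys where "ys n = (if ps n > 0 then ybar (ps n) (qs n) (xs n) (zs n) else ybar p q x z)" for n
  have yM: "ybar p q x z \<in> M" using ybar_M assms by auto
  have ysM: "\<forall>n. ys n \<in> M"
  proof
    fix n show "ys n \<in> M" unfolding ys_def using ybar_M[of "ps n" "qs n" "xs n" "zs n"] assms yM
      by (simp add: add_pos_nonneg)
  qed
  have ys: "ys \<longlonglongrightarrow> ybar p q x z"
    using yb by (rule Lim_transform_eventually) (use ev in \<open>auto elim: eventually_mono simp: ys_def\<close>)
  have "(\<lambda>n. ps n * kl (xs n) (ys n) + qs n * kl (zs n) (ys n)) \<longlonglongrightarrow> Hval p q x z"
    unfolding Hval_def using kl_tendsto[OF _ yM _ ysM _ ys] assms by (intro tendsto_intros) auto
  then show ?thesis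
    by (rule Lim_transform_eventually) (use ev in \<open>auto elim!: eventually_mono simp: ys_def Hval_def\<close>)
qed

end



lemma best_arm_eq: "unique_best m a \<Longrightarrow> best_arm m = a"
  unfolding best_arm_def
proof (rule the_equality)
  fix x assume "unique_best m a" "unique_best m x"
  then show "x = a" unfolding unique_best_def using less_asym by blast
qed

lemma wc_nonneg: "\<forall>i. (c::real^'k) $ i > 0 \<Longrightarrow> \<forall>i. (w::real^'k) $ i \<ge> 0 \<Longrightarrow> w$i/c$i \<ge> 0"
  by (simp add: divide_nonneg_pos)

context nefl
begin

lemma alt_iff: "unique_best m a \<Longrightarrow>
  l \<in> alt_set Th b m \<longleftrightarrow> (\<forall>i. l$i \<in> M) \<and> (\<exists>j. j \<noteq> a \<and> l$a \<le> l$j)"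
  unfolding alt_set_def using best_arm_eq[of m a] by (auto simp: unique_best_def not_less)

lemma obj_Sf: "objective Th b m c w = Inf (Sf m c w ` alt_set Th b m)"
  unfolding objective_def Sf_def ..

lemma Sf_nonneg: assumes "\<forall>i. m$i \<in> M" "\<forall>i. l$i \<in> M" "\<forall>i. c$i > 0" "\<forall>i. w$i \<ge> 0"
  shows "Sf m c w l \<ge> 0"
  unfolding Sf_def using assms kl_nonneg wc_nonneg by (intro sum_nonneg mult_nonneg_nonneg) auto

lemma obj_le_Sf: assumes "unique_best m a" "\<forall>i. m$i \<in> M" "\<forall>i. c$i > 0" "\<forall>i. w$i \<ge> 0"
  "l \<in> alt_set Th b m"
  shows "objective Th b m c w \<le> Sf m c w l"
  unfolding obj_Sf
proof (rule cInf_lower)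
  show "Sf m c w l \<in> Sf m c w ` alt_set Th b m" using assms by blast
  show "bdd_below (Sf m c w ` alt_set Th b m)"
  proof (rule bdd_belowI[of _ 0])
    fix x assume "x \<in> Sf m c w ` alt_set Th b m"
    then obtain l' where "l' \<in> alt_set Th b m" "x = Sf m c w l'" by blast
    then show "0 \<le> x" using assms Sf_nonneg alt_iff[OF assms(1)] by blast
  qed
qed

lemma obj_UB2: assumes "unique_best m a" "\<forall>i. m$i \<in> M" "\<forall>i. c$i > 0" "\<forall>i. w$i \<ge> 0"
  "j \<noteq> a" "y \<in> M"
  shows "objective Th b m c w \<le> w$a/c$a * kl (m$a) y + w$j/c$j * kl (m$j) y"
proof -
  define l where "l = (\<chi> i. if i = a \<or> i = j then y else m$i)"
  have lalt: "l \<in> alt_set Th b m" using assms unfolding alt_iff[OF assms(1)] l_def by auto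
  have "Sf m c w l = (\<Sum>i\<in>{a,j}. w$i / c$i * kl (m$i) (l$i))"
    unfolding Sf_def by (rule sum.mono_neutral_right) (auto simp: l_def kl_self)
  also have "\<dots> = w$a/c$a * kl (m$a) y + w$j/c$j * kl (m$j) y"
    using assms(5) by (simp add: l_def)
  finally show ?thesis using obj_le_Sf[OF assms(1-4) lalt] by simp
qed

lemma obj_le_H: assumes "unique_best m a" "\<forall>i. m$i \<in> M" "\<forall>i. c$i > 0" "\<forall>i. w$i \<ge> 0"
  "j \<noteq> a"
  shows "objective Th b m c w \<le> Hval (w$a/c$a) (w$j/c$j) (m$a) (m$j)"
proof (cases "w$a/c$a + w$j/c$j = 0")
  case True
  have "w$a/c$a \<ge> 0" "w$j/c$j \<ge> 0" using assms(3,4) by (simp_all add: divide_nonneg_pos)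
  then have z: "w$a/c$a = 0" "w$j/c$j = 0" using True by linarith+
  have H0: "Hval (w$a/c$a) (w$j/c$j) (m$a) (m$j) = 0" unfolding z Hval_def by simp
  have "objective Th b m c w \<le> w$a/c$a * kl (m$a) (m$a) + w$j/c$j * kl (m$j) (m$a)"
    using obj_UB2[OF assms, of "m$a"] assms by blast
  moreover have "w$a/c$a * kl (m$a) (m$a) + w$j/c$j * kl (m$j) (m$a) = 0" by (simp only: z)
  ultimately show ?thesis using H0 by linarith
next
  case False
  have "w$a/c$a \<ge> 0" "w$j/c$j \<ge> 0" using assms(3,4) by (simp_all add: divide_nonneg_pos)
  then have yM: "ybar (w$a/c$a) (w$j/c$j) (m$a) (m$j) \<in> M"
    using ybar_M False assms by auto
  show ?thesis using obj_UB2[OF assms yM] unfolding Hval_def .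
qed

lemma Sf_ge_H: assumes "unique_best m a" "\<forall>i. m$i \<in> M" "\<forall>i. c$i > 0" "\<forall>i. w$i \<ge> 0"
  "\<forall>i. l$i \<in> M" "j \<noteq> a" "l$a \<le> l$j"
  shows "Hval (w$a/c$a) (w$j/c$j) (m$a) (m$j) \<le> Sf m c w l"
proof -
  let ?p = "w$a/c$a" and ?q = "w$j/c$j"
  have pq: "?p \<ge> 0" "?q \<ge> 0" using assms(3,4) by (simp_all add: divide_nonneg_pos)
  have mja: "m$j < m$a" using assms unfolding unique_best_def by auto
  have "(\<Sum>i\<in>{a,j}. w$i / c$i * kl (m$i) (l$i)) \<le> Sf m c w l"
    unfolding Sf_def using assms kl_nonneg
    by (intro sum_mono2) (auto intro!: divide_nonneg_pos mult_nonneg_nonneg)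
  then have S: "?p * kl (m$a) (l$a) + ?q * kl (m$j) (l$j) \<le> Sf m c w l"
    using assms(6) by simp
  have "Hval ?p ?q (m$a) (m$j) \<le> ?p * kl (m$a) (l$a) + ?q * kl (m$j) (l$j)"
  proof (cases "m$j \<le> l$a")
    case True
    have "kl (m$j) (l$a) \<le> kl (m$j) (l$j)" using kl_mono_up assms True by blast
    then have "?q * kl (m$j) (l$a) \<le> ?q * kl (m$j) (l$j)" by (rule mult_left_mono[OF _ pq(2)])
    moreover have "Hval ?p ?q (m$a) (m$j) \<le> ?p * kl (m$a) (l$a) + ?q * kl (m$j) (l$a)"
      using Hval_le pq assms by blast
    ultimately show ?thesis by linarith
  next
    case False
    have "kl (m$a) (m$j) \<le> kl (m$a) (l$a)" using kl_mono_down assms False mja by auto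
    then have "?p * kl (m$a) (m$j) \<le> ?p * kl (m$a) (l$a)" by (rule mult_left_mono[OF _ pq(1)])
    moreover have "Hval ?p ?q (m$a) (m$j) \<le> ?p * kl (m$a) (m$j) + ?q * kl (m$j) (m$j)"
      using Hval_le pq assms by blast
    moreover have "?q * kl (m$j) (l$j) \<ge> 0"
      by (rule mult_nonneg_nonneg[OF pq(2) kl_nonneg]) (use assms in auto)
    ultimately show ?thesis by (simp add: kl_self)
  qed
  then show ?thesis using S by linarith
qed

lemma obj_ge: assumes "unique_best m a" "\<forall>i. m$i \<in> M" "\<forall>i. c$i > 0" "\<forall>i. w$i \<ge> 0"
  "\<exists>j. j \<noteq> a" "\<And>j. j \<noteq> a \<Longrightarrow> t \<le> Hval (w$a/c$a) (w$j/c$j) (m$a) (m$j)"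
  shows "t \<le> objective Th b m c w"
  unfolding obj_Sf
proof (rule cInf_greatest)
  obtain j where j: "j \<noteq> a" using assms by blast
  have "(\<chi> i. m$a) \<in> alt_set Th b m" using assms j unfolding alt_iff[OF assms(1)] by auto
  then show "Sf m c w ` alt_set Th b m \<noteq> {}" by blast
next
  fix x assume "x \<in> Sf m c w ` alt_set Th b m"
  then obtain l where l: "l \<in> alt_set Th b m" "x = Sf m c w l" by blast
  then obtain j where "\<forall>i. l$i \<in> M" "j \<noteq> a" "l$a \<le> l$j" using alt_iff[OF assms(1)] by blast
  then show "t \<le> x" using Sf_ge_H[OF assms(1-4)] assms(6) l by fastforce
qed

end



lemma simplex_iff: "w \<in> prob_simplex \<longleftrightarrow> (\<forall>a. 0 \<le> w$a) \<and> (\<Sum>a\<in>UNIV. w$a) = 1"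
  unfolding prob_simplex_def by simp

context nefl
begin

definition "ismax m c w \<longleftrightarrow> w \<in> prob_simplex \<and> (\<forall>v\<in>prob_simplex. objective Th b m c v \<le> objective Th b m c w)"

lemma Min_ex:
  fixes f :: "'k::finite \<Rightarrow> real"
  assumes "\<exists>j. j \<noteq> a" "\<forall>j. j \<noteq> a \<longrightarrow> f j > V"
  shows "\<exists>t>V. \<forall>j. j \<noteq> a \<longrightarrow> t \<le> f j"
proof -
  let ?S = "f ` {j. j \<noteq> a}"
  have fin: "finite ?S" and ne: "?S \<noteq> {}" using assms by auto
  have "Min ?S > V" using Min_gr_iff[OF fin ne] assms by auto
  moreover have "\<And>j. j \<noteq> a \<Longrightarrow> Min ?S \<le> f j" using fin by auto
  ultimately show ?thesis by blast
qed

lemma max_pos_val: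
  assumes ub: "unique_best m a" and mM: "\<forall>i. m$i \<in> M" and cp: "\<forall>i. c$i > 0"
    and K2: "\<exists>j. j \<noteq> a" and mx: "ismax m c w"
  shows "objective Th b m c w > 0"
proof -
  define K where "K = real (card (UNIV :: 'a set))"
  have Kp: "K > 0" unfolding K_def by simp
  define u :: "real^'a" where "u = (\<chi> i. 1 / K)"
  have us: "u \<in> prob_simplex" unfolding simplex_iff u_def using Kp by (simp add: K_def)
  have un: "\<forall>i. u$i \<ge> 0" using Kp by (simp add: u_def)
  have pos: "Hval (u$a/c$a) (u$j/c$j) (m$a) (m$j) > 0" if j: "j \<noteq> a" for j
  proof (rule Hval_pos)
    show "u$a/c$a > 0" "u$j/c$j > 0" using Kp cp by (simp_all add: u_def)
    show "m$a \<in> M" "m$j \<in> M" using mM by auto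
    show "m$j < m$a" using ub j unfolding unique_best_def by auto
  qed
  have "\<exists>t>0. \<forall>j. j \<noteq> a \<longrightarrow> t \<le> Hval (u$a/c$a) (u$j/c$j) (m$a) (m$j)"
    by (rule Min_ex) (use K2 pos in auto)
  then obtain t where t: "t > 0" "\<And>j. j \<noteq> a \<Longrightarrow> t \<le> Hval (u$a/c$a) (u$j/c$j) (m$a) (m$j)"
    by blast
  have "t \<le> objective Th b m c u" using obj_ge[OF ub mM cp un K2 t(2)] .
  also have "\<dots> \<le> objective Th b m c w" using mx us unfolding ismax_def by blast
  finally show ?thesis using t by linarith
qed

lemma max_pos_w:
  assumes ub: "unique_best m a" and mM: "\<forall>i. m$i \<in> M" and cp: "\<forall>i. c$i > 0"
    and K2: "\<exists>j. j \<noteq> a" and mx: "ismax m c w"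
  shows "w$i > 0"
proof (rule ccontr)
  assume "\<not> w$i > 0"
  moreover have wn: "\<forall>i. w$i \<ge> 0" using mx unfolding ismax_def simplex_iff by blast
  ultimately have w0: "w$i = 0" by (meson not_less order_antisym)
  have V: "objective Th b m c w > 0" using max_pos_val assms by blast
  show False
  proof (cases "i = a")
    case True
    obtain j where j: "j \<noteq> a" using K2 by blast
    have "objective Th b m c w \<le> w$a/c$a * kl (m$a) (m$j) + w$j/c$j * kl (m$j) (m$j)"
      using obj_UB2[OF ub mM cp wn j] mM by blast
    also have "\<dots> = 0" using w0 True by (simp add: kl_self)
    finally show False using V by linarith
  next
    case False
    have "objective Th b m c w \<le> w$a/c$a * kl (m$a) (m$a) + w$i/c$i * kl (m$i) (m$a)"
      using obj_UB2[OF ub mM cp wn False] mM by blast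
    also have "\<dots> = 0" using w0 by (simp add: kl_self)
    finally show False using V by linarith
  qed
qed

lemma max_balanced:
  assumes ub: "unique_best m a" and mM: "\<forall>i. m$i \<in> M" and cp: "\<forall>i. c$i > 0"
    and K2: "\<exists>j. j \<noteq> a" and mx: "ismax m c u" and k: "k \<noteq> a"
  shows "Hval (u$a/c$a) (u$k/c$k) (m$a) (m$k) \<le> objective Th b m c u"
proof (rule ccontr)
  define V where "V = objective Th b m c u"
  define Hk where "Hk = Hval (u$a/c$a) (u$k/c$k) (m$a) (m$k)"
  assume "\<not> Hval (u$a/c$a) (u$k/c$k) (m$a) (m$k) \<le> objective Th b m c u"
  then have HkV: "Hk > V" unfolding Hk_def V_def by simp
  have Vp: "V > 0" unfolding V_def using max_pos_val assms by blast
  have up: "\<forall>i. u$i > 0" using max_pos_w[OF ub mM cp K2 mx] by blast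
  have un: "\<forall>i. u$i \<ge> 0" using up less_imp_le by blast
  have us: "(\<Sum>i\<in>UNIV. u$i) = 1" using mx unfolding ismax_def simplex_iff by blast
  have "(\<Sum>i\<in>{a,k}. u$i) \<le> (\<Sum>i\<in>UNIV. u$i)" using un by (intro sum_mono2) auto
  then have "u$a + u$k \<le> 1" using k us by simp
  then have uk1: "u$k < 1" using up[rule_format, of a] by linarith
  define t where "t = (Hk - V) / (2 * Hk)"
  have t0: "t > 0" and t1: "t < 1" unfolding t_def using HkV Vp by (auto simp: field_simps)
  have tH: "(1 - t) * Hk > V"
  proof -
    have "(1 - t) * Hk = (Hk + V) / 2" unfolding t_def using HkV Vp by (simp add: field_simps)
    then show ?thesis using HkV by simp
  qed
  define r where "r = (1 - (1 - t) * u$k) / (1 - u$k)"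
  have r1: "r > 1" unfolding r_def using uk1 t0 up by (simp add: field_simps)
  define u' :: "real^'a" where "u' = (\<chi> i. if i = k then (1 - t) * u$k else r * u$i)"
  have u'n: "\<forall>i. u'$i \<ge> 0" unfolding u'_def using un r1 t1 by simp
  have "(\<Sum>i\<in>UNIV. u'$i) = u'$k + (\<Sum>i\<in>UNIV - {k}. u'$i)"
    by (simp add: sum.remove)
  also have "(\<Sum>i\<in>UNIV - {k}. u'$i) = r * (\<Sum>i\<in>UNIV - {k}. u$i)"
    unfolding u'_def by (simp add: sum_distrib_left)
  also have "(\<Sum>i\<in>UNIV - {k}. u$i) = 1 - u$k" using us sum.remove[of UNIV k "\<lambda>i. u$i"] by simp
  finally have "(\<Sum>i\<in>UNIV. u'$i) = (1 - t) * u$k + r * (1 - u$k)" by (simp add: u'_def)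
  also have "\<dots> = 1" unfolding r_def using uk1 by simp
  finally have u's: "u' \<in> prob_simplex" unfolding simplex_iff using u'n by simp
  have posu': "Hval (u'$a/c$a) (u'$j/c$j) (m$a) (m$j) > V" if j: "j \<noteq> a" for j
  proof -
    have u'a: "u'$a/c$a = r * (u$a/c$a)" unfolding u'_def using k by simp
    show "Hval (u'$a/c$a) (u'$j/c$j) (m$a) (m$j) > V"
    proof (cases "j = k")
      case True
      have "(1 - t) * Hk = Hval ((1-t) * (u$a/c$a)) ((1-t) * (u$k/c$k)) (m$a) (m$k)"
        unfolding Hk_def using Hval_scale[of "1-t" "u$a/c$a" "u$k/c$k" "m$a" "m$k"] t1 by simp
      also have "\<dots> \<le> Hval (r * (u$a/c$a)) ((1-t) * (u$k/c$k)) (m$a) (m$k)"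
      proof (rule Hval_mono)
        have ua: "u$a/c$a \<ge> 0" "u$k/c$k \<ge> 0" using un cp by (simp_all add: divide_nonneg_pos less_imp_le)
        show "(1-t)*(u$a/c$a) \<le> r*(u$a/c$a)" by (rule mult_right_mono) (use t0 r1 ua in auto)
        show "0 \<le> (1-t)*(u$a/c$a)" "0 \<le> (1-t)*(u$k/c$k)"
          using t1 ua by (intro mult_nonneg_nonneg; simp)+
        show "m$a \<in> M" "m$k \<in> M" using mM by auto
      qed
      also have "\<dots> = Hval (u'$a/c$a) (u'$j/c$j) (m$a) (m$j)"
        using True u'a k by (simp add: u'_def)
      finally show ?thesis using tH by linarith
    next
      case False
      have "V \<le> Hval (u$a/c$a) (u$j/c$j) (m$a) (m$j)"
        unfolding V_def using obj_le_H[OF ub mM cp un j] .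
      moreover have "Hval (u'$a/c$a) (u'$j/c$j) (m$a) (m$j) = r * Hval (u$a/c$a) (u$j/c$j) (m$a) (m$j)"
      proof -
        have uj': "u'$j/c$j = r * (u$j/c$j)" using False by (simp add: u'_def)
        have "Hval (r*(u$a/c$a)) (r*(u$j/c$j)) (m$a) (m$j) = r * Hval (u$a/c$a) (u$j/c$j) (m$a) (m$j)"
          by (rule Hval_scale) (use r1 in linarith)
        then show ?thesis by (simp only: u'a uj')
      qed
      moreover have "r * Hval (u$a/c$a) (u$j/c$j) (m$a) (m$j) > 1 * Hval (u$a/c$a) (u$j/c$j) (m$a) (m$j)"
        by (rule mult_strict_right_mono) (use r1 Vp calculation in linarith)+
      ultimately show ?thesis by linarith
    qed
  qed
  have "\<exists>t>V. \<forall>j. j \<noteq> a \<longrightarrow> t \<le> Hval (u'$a/c$a) (u'$j/c$j) (m$a) (m$j)"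
    by (rule Min_ex) (use K2 posu' in auto)
  then obtain t' where t': "t' > V" "\<And>j. j \<noteq> a \<Longrightarrow> t' \<le> Hval (u'$a/c$a) (u'$j/c$j) (m$a) (m$j)"
    by blast
  have "t' \<le> objective Th b m c u'" using obj_ge[OF ub mM cp u'n K2 t'(2)] .
  then have "objective Th b m c u' > V" using t'(1) by linarith
  moreover have "objective Th b m c u' \<le> V" using mx u's unfolding ismax_def V_def by blast
  ultimately show False by linarith
qed

end



lemma avg1: assumes "(H::real) = (A + X + B + Y) / 2" "0 \<le> X" "0 \<le> Y" "V \<le> A" "V \<le> B"
  shows "V \<le> H"
  using assms by (simp add: field_simps)
lemma avg2: assumes "(H::real) = (A + X + B + Y) / 2" "0 \<le> X" "0 \<le> Y" "V \<le> A" "V \<le> B" "H \<le> V"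
  shows "X \<le> 0 \<and> Y \<le> 0"
  using assms by (simp add: field_simps)

context nefl
begin

lemma max_unique:
  assumes ub: "unique_best m a" and mM: "\<forall>i. m$i \<in> M" and cp: "\<forall>i. c$i > 0"
    and K2: "\<exists>j. j \<noteq> a" and mx: "ismax m c w" and mx': "ismax m c w'"
  shows "w = w'"
proof -
  define V where "V = objective Th b m c w"
  have V': "objective Th b m c w' = V"
    using mx mx' unfolding ismax_def V_def by (meson order_antisym)
  have wp: "\<forall>i. w$i > 0" and wp': "\<forall>i. w'$i > 0" using max_pos_w assms by blast+
  have wn: "\<forall>i. w$i \<ge> 0" and wn': "\<forall>i. w'$i \<ge> 0" using wp wp' less_imp_le by blast+
  have ws: "(\<Sum>i\<in>UNIV. w$i) = 1" and ws': "(\<Sum>i\<in>UNIV. w'$i) = 1"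
    using mx mx' unfolding ismax_def simplex_iff by blast+
  define u :: "real^'a" where "u = (\<chi> i. (w$i + w'$i) / 2)"
  have un: "\<forall>i. u$i \<ge> 0" using wn wn' by (simp add: u_def)
  have "(\<Sum>i\<in>UNIV. u$i) = ((\<Sum>i\<in>UNIV. w$i) + (\<Sum>i\<in>UNIV. w'$i)) / 2"
    unfolding u_def by (simp add: sum.distrib sum_divide_distrib[symmetric])
  then have us: "u \<in> prob_simplex" unfolding simplex_iff using un ws ws' by simp
  have key: "Hval (u$a/c$a) (u$j/c$j) (m$a) (m$j) =
      (Hval (w$a/c$a) (w$j/c$j) (m$a) (m$j) + (w$a/c$a + w$j/c$j) * kl (ybar (w$a/c$a) (w$j/c$j) (m$a) (m$j)) (ybar (u$a/c$a) (u$j/c$j) (m$a) (m$j))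
     + Hval (w'$a/c$a) (w'$j/c$j) (m$a) (m$j) + (w'$a/c$a + w'$j/c$j) * kl (ybar (w'$a/c$a) (w'$j/c$j) (m$a) (m$j)) (ybar (u$a/c$a) (u$j/c$j) (m$a) (m$j))) / 2"
    if j: "j \<noteq> a" for j
  proof -
    let ?Y = "ybar (u$a/c$a) (u$j/c$j) (m$a) (m$j)"
    have pos: "w$a/c$a + w$j/c$j \<noteq> 0" "w'$a/c$a + w'$j/c$j \<noteq> 0"
      using wp wp' cp by (metis add_pos_pos divide_pos_pos less_irrefl)+
    have "Hval (u$a/c$a) (u$j/c$j) (m$a) (m$j) = (u$a/c$a) * kl (m$a) ?Y + (u$j/c$j) * kl (m$j) ?Y"
      unfolding Hval_def ..
    also have "\<dots> = ((w$a/c$a) * kl (m$a) ?Y + (w$j/c$j) * kl (m$j) ?Y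
                  + ((w'$a/c$a) * kl (m$a) ?Y + (w'$j/c$j) * kl (m$j) ?Y)) / 2"
    proof -
      have "c$a \<noteq> 0" "c$j \<noteq> 0" using cp by (metis less_irrefl)+
      then show ?thesis unfolding u_def by (simp add: field_simps)
    qed
    finally show ?thesis by (simp only: compensation[OF pos(1)] compensation[OF pos(2)] add.assoc)
  qed
  have klnn: "kl (ybar (v$a/c$a) (v$j/c$j) (m$a) (m$j)) (ybar (u$a/c$a) (u$j/c$j) (m$a) (m$j)) \<ge> 0"
    and yvM: "ybar (v$a/c$a) (v$j/c$j) (m$a) (m$j) \<in> M"
    if "\<forall>i. v$i > 0" for v j
  proof -
    have yM: "ybar (v$a/c$a) (v$j/c$j) (m$a) (m$j) \<in> M"
      if vp: "\<forall>i. v$i > 0" for v j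
    proof (rule ybar_M)
      show "v$a/c$a \<ge> 0" "v$j/c$j \<ge> 0" "v$a/c$a + v$j/c$j > 0" using vp cp by (simp_all add: add_pos_pos less_imp_le)
      show "m$a \<in> M" "m$j \<in> M" using mM by auto
    qed
    have up: "\<forall>i. u$i > 0" using wp wp' by (simp add: u_def add_pos_pos)
    show "ybar (v$a/c$a) (v$j/c$j) (m$a) (m$j) \<in> M" using yM that by blast
    show "kl (ybar (v$a/c$a) (v$j/c$j) (m$a) (m$j)) (ybar (u$a/c$a) (u$j/c$j) (m$a) (m$j)) \<ge> 0"
      using kl_nonneg yM that up by blast
  qed
  have Hw: "V \<le> Hval (w$a/c$a) (w$j/c$j) (m$a) (m$j)" if "j \<noteq> a" for j
    unfolding V_def using obj_le_H[OF ub mM cp wn that] .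
  have Hw': "V \<le> Hval (w'$a/c$a) (w'$j/c$j) (m$a) (m$j)" if "j \<noteq> a" for j
    using obj_le_H[OF ub mM cp wn' that] V' by simp
  have sp: "w$a/c$a + w$j/c$j > 0" "w'$a/c$a + w'$j/c$j > 0" for j
    using wp wp' cp by (simp_all add: add_pos_pos)
  have Hu: "V \<le> Hval (u$a/c$a) (u$j/c$j) (m$a) (m$j)" if j: "j \<noteq> a" for j
  proof -
    have "0 \<le> (w$a/c$a + w$j/c$j) * kl (ybar (w$a/c$a) (w$j/c$j) (m$a) (m$j)) (ybar (u$a/c$a) (u$j/c$j) (m$a) (m$j))"
      using sp(1)[of j] klnn[OF wp, of j] by simp
    moreover have "0 \<le> (w'$a/c$a + w'$j/c$j) * kl (ybar (w'$a/c$a) (w'$j/c$j) (m$a) (m$j)) (ybar (u$a/c$a) (u$j/c$j) (m$a) (m$j))"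
      using sp(2)[of j] klnn[OF wp', of j] by simp
    ultimately show ?thesis using avg1[OF key[OF j]] Hw[OF j] Hw'[OF j] by blast
  qed
  have "V \<le> objective Th b m c u" using obj_ge[OF ub mM cp un K2 Hu] .
  moreover have "objective Th b m c u \<le> V" using mx us unfolding ismax_def V_def by blast
  ultimately have Vu: "objective Th b m c u = V" by linarith
  then have mxu: "ismax m c u" using mx us unfolding ismax_def V_def by simp
  have ratio: "w$j * w'$a = w'$j * w$a" for j
  proof (cases "j = a")
    case True then show ?thesis by simp
  next
    case False
    let ?Y = "ybar (u$a/c$a) (u$j/c$j) (m$a) (m$j)"
    let ?y = "ybar (w$a/c$a) (w$j/c$j) (m$a) (m$j)"
    let ?y' = "ybar (w'$a/c$a) (w'$j/c$j) (m$a) (m$j)"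
    have "Hval (u$a/c$a) (u$j/c$j) (m$a) (m$j) \<le> V"
      using max_balanced[OF ub mM cp K2 mxu False] Vu by simp
    moreover have k1: "kl ?y ?Y \<ge> 0" "kl ?y' ?Y \<ge> 0" using klnn wp wp' by blast+
    moreover have "0 \<le> (w$a/c$a + w$j/c$j) * kl ?y ?Y" "0 \<le> (w'$a/c$a + w'$j/c$j) * kl ?y' ?Y"
      using k1 sp[of j] by simp_all
    ultimately have le: "(w$a/c$a + w$j/c$j) * kl ?y ?Y \<le> 0 \<and> (w'$a/c$a + w'$j/c$j) * kl ?y' ?Y \<le> 0"
      using avg2[OF key[OF False]] Hw[OF False] Hw'[OF False] by blast
    then have "kl ?y ?Y \<le> 0" using sp(1)[of j] by (simp add: mult_le_0_iff)
    have up: "\<forall>i. u$i > 0" using wp wp' by (simp add: u_def add_pos_pos)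
    have YM: "?Y \<in> M" using yvM[OF up] .
    have e1: "?y = ?Y" using kl_zero_iff[OF yvM[OF wp] YM] \<open>kl ?y ?Y \<le> 0\<close> by blast
    have "(w'$a/c$a + w'$j/c$j) * kl ?y' ?Y \<le> 0" using le by blast
    then have "kl ?y' ?Y \<le> 0" using sp(2)[of j] by (simp add: mult_le_0_iff)
    then have e2: "?y' = ?Y" using kl_zero_iff[OF yvM[OF wp'] YM] by blast
    have mja: "m$a \<noteq> m$j" using ub False unfolding unique_best_def by (metis less_irrefl)
    have "(w$j/c$j) * (w'$a/c$a) = (w'$j/c$j) * (w$a/c$a)"
      by (rule ybar_eq[OF _ _ _ _ mja]) (use wp wp' cp e1 e2 in auto)
    moreover have "c$a \<noteq> 0" "c$j \<noteq> 0" using cp by (metis less_irrefl)+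
    ultimately show ?thesis by (simp add: field_simps)
  qed
  have "(\<Sum>i\<in>UNIV. w$i * w'$a) = (\<Sum>i\<in>UNIV. w'$i * w$a)" using ratio by simp
  then have "w'$a = w$a" using ws ws' by (simp add: sum_distrib_right[symmetric])
  then show ?thesis using ratio wp unfolding vec_eq_iff
    by (metis mult_cancel_right order_less_irrefl)
qed

end



lemma ev_best:
  fixes ms :: "nat \<Rightarrow> real^'k::finite"
  assumes "unique_best mu a" "ms \<longlonglongrightarrow> mu"
  shows "eventually (\<lambda>n. unique_best (ms n) a) sequentially"
proof -
  have "\<forall>j. eventually (\<lambda>n. j \<noteq> a \<longrightarrow> ms n $ j < ms n $ a) sequentially"
  proof
    fix j
    show "eventually (\<lambda>n. j \<noteq> a \<longrightarrow> ms n $ j < ms n $ a) sequentially"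
    proof (cases "j = a")
      case True then show ?thesis by simp
    next
      case False
      then have "0 < mu $ a - mu $ j" using assms(1) unfolding unique_best_def by auto
      moreover have "(\<lambda>n. ms n $ a - ms n $ j) \<longlonglongrightarrow> mu $ a - mu $ j"
        using assms(2) by (intro tendsto_intros)
      ultimately have "eventually (\<lambda>n. 0 < ms n $ a - ms n $ j) sequentially"
        using order_tendstoD(1) by blast
      then show ?thesis by (rule eventually_mono) simp
    qed
  qed
  then have "eventually (\<lambda>n. \<forall>j. j \<noteq> a \<longrightarrow> ms n $ j < ms n $ a) sequentially"
    by (intro eventually_all_finite) (use \<open>\<forall>j. _\<close> in blast)
  then show ?thesis unfolding unique_best_def .
qed

lemma simplex_le1: "w \<in> prob_simplex \<Longrightarrow> w$i \<le> 1"
proof -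
  assume "w \<in> prob_simplex"
  then have "\<forall>a. 0 \<le> w$a" "(\<Sum>a\<in>UNIV. w$a) = 1" unfolding simplex_iff by auto
  moreover have "w$i \<le> (\<Sum>a\<in>UNIV. w$a)" by (rule member_le_sum) (use calculation in auto)
  ultimately show ?thesis by simp
qed

lemma compact_simplex: "compact (prob_simplex :: (real^'k::finite) set)"
unfolding compact_eq_bounded_closed
proof
  have "prob_simplex \<subseteq> cbox (0::real^'k) 1"
  proof
    fix x :: "real^'k" assume x: "x \<in> prob_simplex"
    then have "\<forall>i. 0 \<le> x$i \<and> x$i \<le> 1" using simplex_le1 unfolding simplex_iff by blast
    then show "x \<in> cbox 0 1" unfolding mem_box_cart by simp
  qed
  then show "bounded (prob_simplex :: (real^'k) set)" using bounded_cbox bounded_subset by blast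
  have "prob_simplex = {w::real^'k. (\<forall>a. 0 \<le> w$a) \<and> (\<Sum>a\<in>UNIV. w$a) = 1}"
    unfolding prob_simplex_def ..
  moreover have "closed {w::real^'k. (\<forall>a. 0 \<le> w$a) \<and> (\<Sum>a\<in>UNIV. w$a) = 1}"
    by (intro closed_Collect_conj closed_Collect_all closed_Collect_le closed_Collect_eq continuous_intros)
  ultimately show "closed (prob_simplex :: (real^'k) set)" by simp
qed

context nefl
begin

lemma obj_usc:
  assumes ub: "unique_best m a" and mM: "\<forall>i. m$i \<in> M" and cp: "\<forall>i. c$i > 0"
    and msM: "\<forall>n i. ms n $ i \<in> M" and wsS: "\<forall>n. ws n \<in> prob_simplex"
    and evb: "eventually (\<lambda>n. unique_best (ms n) a) sequentially"
    and csp: "\<forall>n i. cs n $ i > 0"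
    and lm: "ms \<longlonglongrightarrow> m" and lc: "cs \<longlonglongrightarrow> c" and lw: "ws \<longlonglongrightarrow> w"
    and lt: "objective Th b m c w < t"
  shows "eventually (\<lambda>n. objective Th b (ms n) (cs n) (ws n) < t) sequentially"
proof -
  have altn: "eventually (\<lambda>n. alt_set Th b (ms n) = alt_set Th b m) sequentially"
    using evb by (rule eventually_mono) (auto simp: alt_iff[OF ub] alt_iff)
  show ?thesis
  proof (cases "alt_set Th b m = {}")
    case True
    show ?thesis using altn
      by (rule eventually_mono) (use lt True in \<open>simp add: obj_Sf\<close>)
  next
    case False
    then obtain l where l: "l \<in> alt_set Th b m" "Sf m c w l < t"
      using cInf_lessD[of "Sf m c w ` alt_set Th b m" t] lt unfolding obj_Sf by blast
    have lM: "\<forall>i. l$i \<in> M" using l alt_iff[OF ub] by blast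
    have "(\<lambda>n. Sf (ms n) (cs n) (ws n) l) \<longlonglongrightarrow> Sf m c w l"
      unfolding Sf_def
    proof (intro tendsto_sum tendsto_mult tendsto_divide)
      fix i
      show "(\<lambda>n. ws n $ i) \<longlonglongrightarrow> w $ i" "(\<lambda>n. cs n $ i) \<longlonglongrightarrow> c $ i"
        using lw lc by (auto intro: tendsto_vec_nth)
      show "c $ i \<noteq> 0" using cp by (metis less_irrefl)
      show "(\<lambda>n. kl (ms n $ i) (l $ i)) \<longlonglongrightarrow> kl (m $ i) (l $ i)"
        using kl_tendsto[of "m$i" "l$i" "\<lambda>n. ms n $ i" "\<lambda>n. l$i"] mM lM msM lm
        by (auto intro: tendsto_vec_nth)
    qed
    then have "eventually (\<lambda>n. Sf (ms n) (cs n) (ws n) l < t) sequentially"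
      using order_tendstoD(2) l(2) by blast
    then show ?thesis using altn evb
    proof eventually_elim
      case (elim n)
      have "l \<in> alt_set Th b (ms n)" using elim l by simp
      moreover have "\<forall>i. ws n $ i \<ge> 0" using wsS unfolding simplex_iff by blast
      ultimately have "objective Th b (ms n) (cs n) (ws n) \<le> Sf (ms n) (cs n) (ws n) l"
        using obj_le_Sf[OF elim(3)] msM csp by blast
      then show ?case using elim(1) by linarith
    qed
  qed
qed

lemma exists_max:
  assumes ub: "unique_best m a" and mM: "\<forall>i. m$i \<in> M" and cp: "\<forall>i. c$i > 0"
  shows "\<exists>w. ismax m c w"
proof (cases "\<exists>j. j \<noteq> a")
  case False
  then have U: "UNIV = {a}" by auto
  define w :: "real^'a" where "w = (\<chi> i. 1)"
  have "(\<Sum>i\<in>UNIV. w$i) = (\<Sum>i\<in>{a}. w$i)" by (simp only: U)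
  then have ws: "w \<in> prob_simplex" unfolding simplex_iff by (simp add: w_def)
  have "alt_set Th b m = {}" using False alt_iff[OF ub] by auto
  then have "objective Th b m c v = objective Th b m c w" for v unfolding obj_Sf by simp
  then have "ismax m c w" using ws unfolding ismax_def by (metis order.refl)
  then show ?thesis by blast
next
  case True
  then obtain j where j: "j \<noteq> a" by blast
  let ?F = "\<lambda>v. objective Th b m c v"
  let ?S = "prob_simplex :: (real^'a) set"
  have ne: "?S \<noteq> {}"
  proof -
    define w :: "real^'a" where "w = (\<chi> i. if i = a then 1 else 0)"
    have "w \<in> ?S" unfolding simplex_iff w_def by simp
    then show ?thesis by blast
  qed
  have bdd: "bdd_above (?F ` ?S)"
  proof (rule bdd_aboveI[of _ "kl (m$a) (m$j) / c$a"])
    fix x assume "x \<in> ?F ` ?S"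
    then obtain v where v: "v \<in> ?S" "x = ?F v" by blast
    have vn: "\<forall>i. v$i \<ge> 0" using v unfolding simplex_iff by blast
    have "?F v \<le> v$a/c$a * kl (m$a) (m$j) + v$j/c$j * kl (m$j) (m$j)"
      using obj_UB2[OF ub mM cp vn j] mM by blast
    also have "\<dots> = v$a * (kl (m$a) (m$j) / c$a)" by (simp add: kl_self)
    also have "\<dots> \<le> 1 * (kl (m$a) (m$j) / c$a)"
      by (rule mult_right_mono) (use simplex_le1[OF v(1)] kl_nonneg mM cp in \<open>auto intro!: divide_nonneg_pos\<close>)
    finally show "x \<le> kl (m$a) (m$j) / c$a" using v by simp
  qed
  define s where "s = (SUP v\<in>?S. ?F v)"
  have "\<forall>n. \<exists>w. w \<in> ?S \<and> s - 1 / (real n + 1) < ?F w"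
  proof
    fix n
    have "s - 1 / (real n + 1) < s" by simp
    then show "\<exists>w. w \<in> ?S \<and> s - 1 / (real n + 1) < ?F w"
      unfolding s_def using less_cSUP_iff[OF ne bdd] by blast
  qed
  then obtain ws where ws: "\<forall>n. ws n \<in> ?S" "\<forall>n. s - 1 / (real n + 1) < ?F (ws n)"
    by metis
  obtain l r where lr: "l \<in> ?S" "strict_mono r" "(ws \<circ> r) \<longlonglongrightarrow> l"
    using seq_compactE[OF compact_imp_seq_compact[OF compact_simplex] ws(1)] by blast
  have "s \<le> ?F l"
  proof (rule dense_ge)
    fix t assume t: "?F l < t"
    have ev: "eventually (\<lambda>n. ?F ((ws \<circ> r) n) < t) sequentially"
      by (rule obj_usc[OF ub mM cp _ _ _ _ tendsto_const tendsto_const lr(3) t])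
         (use mM ws(1) cp ub in auto)
    have lim: "(\<lambda>n. s - 1 / (real (r n) + 1)) \<longlonglongrightarrow> s"
    proof -
      have "(\<lambda>n. s - 1 / (real n + 1)) \<longlonglongrightarrow> s - 0"
      proof (intro tendsto_intros)
        show "(\<lambda>n. 1 / (real n + 1)) \<longlonglongrightarrow> 0"
          using LIMSEQ_inverse_real_of_nat by (simp add: inverse_eq_divide add.commute)
      qed
      then have "((\<lambda>n. s - 1 / (real n + 1)) \<circ> r) \<longlonglongrightarrow> s" using LIMSEQ_subseq_LIMSEQ lr(2) by simp
      then show ?thesis by (simp add: o_def)
    qed
    have "eventually (\<lambda>n. s - 1 / (real (r n) + 1) \<le> t) sequentially"
      using ev by (rule eventually_mono) (use ws(2) in \<open>smt (verit) comp_apply\<close>)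
    then show "s \<le> t" using tendsto_upperbound[OF lim] by simp
  qed
  moreover have "?F v \<le> s" if "v \<in> ?S" for v unfolding s_def using cSUP_upper[OF that bdd] .
  ultimately have "ismax m c l" unfolding ismax_def using lr(1) by force
  then show ?thesis by blast
qed

end



context nefl
begin

lemma obj_lsc:
  assumes ub: "unique_best mu a" and mM: "\<forall>i. mu$i \<in> M" and cp: "\<forall>i. c$i > 0"
    and K2: "\<exists>j. j \<noteq> a" and wp: "\<forall>i. w$i > 0"
    and msM: "\<forall>n i. ms n $ i \<in> M" and csp: "\<forall>n i. cs n $ i > 0"
    and evb: "eventually (\<lambda>n. unique_best (ms n) a) sequentially"
    and lm: "ms \<longlonglongrightarrow> mu" and lc: "cs \<longlonglongrightarrow> c"
    and lt: "t < objective Th b mu c w"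
  shows "eventually (\<lambda>n. t < objective Th b (ms n) (cs n) w) sequentially"
proof -
  define t2 where "t2 = (t + objective Th b mu c w) / 2"
  have t2: "t < t2" "t2 < objective Th b mu c w" unfolding t2_def using lt by auto
  have wn: "\<forall>i. w$i \<ge> 0" using wp less_imp_le by blast
  have allj: "\<forall>j. eventually (\<lambda>n. j \<noteq> a \<longrightarrow> t2 < Hval (w$a/cs n$a) (w$j/cs n$j) (ms n$a) (ms n$j)) sequentially"
  proof
    fix j
    show "eventually (\<lambda>n. j \<noteq> a \<longrightarrow> t2 < Hval (w$a/cs n$a) (w$j/cs n$j) (ms n$a) (ms n$j)) sequentially"
    proof (cases "j = a")
      case True then show ?thesis by simp
    next
      case False
      have "(\<lambda>n. Hval (w$a/cs n$a) (w$j/cs n$j) (ms n$a) (ms n$j)) \<longlonglongrightarrow> Hval (w$a/c$a) (w$j/c$j) (mu$a) (mu$j)"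
      proof (rule Hval_tendsto)
        show "w$a/c$a > 0" "w$j/c$j > 0" using wp cp by auto
        show "mu$a \<in> M" "mu$j \<in> M" using mM by auto
        show "\<forall>n. 0 \<le> w$a/cs n$a" "\<forall>n. 0 \<le> w$j/cs n$j" using wn csp by (simp_all add: divide_nonneg_pos)
        show "\<forall>n. ms n$a \<in> M" "\<forall>n. ms n$j \<in> M" using msM by auto
        have "c$a \<noteq> 0" "c$j \<noteq> 0" using cp by (metis less_irrefl)+
        then show "(\<lambda>n. w$a/cs n$a) \<longlonglongrightarrow> w$a/c$a" "(\<lambda>n. w$j/cs n$j) \<longlonglongrightarrow> w$j/c$j"
          using lc by (auto intro!: tendsto_intros)
        show "(\<lambda>n. ms n$a) \<longlonglongrightarrow> mu$a" "(\<lambda>n. ms n$j) \<longlonglongrightarrow> mu$j"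
          using lm by (auto intro!: tendsto_intros)
      qed
      moreover have "t2 < Hval (w$a/c$a) (w$j/c$j) (mu$a) (mu$j)"
        using obj_le_H[OF ub mM cp wn False] t2 by linarith
      ultimately have "eventually (\<lambda>n. t2 < Hval (w$a/cs n$a) (w$j/cs n$j) (ms n$a) (ms n$j)) sequentially"
        using order_tendstoD(1) by blast
      then show ?thesis by (rule eventually_mono) simp
    qed
  qed
  then have "eventually (\<lambda>n. \<forall>j. j \<noteq> a \<longrightarrow> t2 < Hval (w$a/cs n$a) (w$j/cs n$j) (ms n$a) (ms n$j)) sequentially"
    by (intro eventually_all_finite) (use allj in blast)
  then show ?thesis using evb
  proof eventually_elim
    case (elim n)
    have "t2 \<le> objective Th b (ms n) (cs n) w"
      by (rule obj_ge[OF elim(2) _ _ wn K2]) (use msM csp elim(1) in \<open>auto intro: less_imp_le\<close>)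
    then show ?case using t2 by linarith
  qed
qed

lemma wstar_ismax:
  assumes "has_unique_best m" "\<forall>i. m$i \<in> M" "\<forall>i. c$i > 0"
  shows "ismax m c (wstar Th b m c)"
proof -
  obtain a where "unique_best m a" using assms(1) unfolding has_unique_best_def by blast
  then have "\<exists>w. ismax m c w" using exists_max assms by blast
  then show ?thesis unfolding wstar_def ismax_def[symmetric] by (rule someI_ex)
qed

lemma main_cont:
  assumes mM: "\<forall>i. mu$i \<in> M" and hb: "has_unique_best mu" and cp: "\<forall>i. c$i > 0"
  shows "continuous (at (mu, c) within
            {(m', c'). (\<forall>a. m' $ a \<in> M) \<and> has_unique_best m' \<and> (\<forall>a. 0 < c' $ a)})
          (\<lambda>(m', c'). wstar Th b m' c')"
proof (rule continuous_within_sequentiallyI)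
  fix u :: "nat \<Rightarrow> (real^'a) \<times> (real^'a)"
  assume lu: "u \<longlonglongrightarrow> (mu, c)"
    and uS: "\<forall>n. u n \<in> {(m', c'). (\<forall>a. m' $ a \<in> M) \<and> has_unique_best m' \<and> (\<forall>a. 0 < c' $ a)}"
  define ms where "ms n = fst (u n)" for n
  define cs where "cs n = snd (u n)" for n
  have lm: "ms \<longlonglongrightarrow> mu" unfolding ms_def using tendsto_fst[OF lu] by simp
  have lc: "cs \<longlonglongrightarrow> c" unfolding cs_def using tendsto_snd[OF lu] by simp
  have msM: "\<forall>n i. ms n $ i \<in> M" and hbn: "\<forall>n. has_unique_best (ms n)"
    and csp: "\<forall>n i. cs n $ i > 0"
    using uS unfolding ms_def cs_def by (auto simp: case_prod_beta)
  obtain a where ub: "unique_best mu a" using hb unfolding has_unique_best_def by blast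
  define W where "W n = wstar Th b (ms n) (cs n)" for n
  define ws where "ws = wstar Th b mu c"
  have mxn: "ismax (ms n) (cs n) (W n)" for n unfolding W_def using wstar_ismax hbn msM csp by blast
  have mx: "ismax mu c ws" unfolding ws_def using wstar_ismax hb mM cp by blast
  have WS: "\<forall>n. W n \<in> prob_simplex" using mxn unfolding ismax_def by blast
  have eq: "(\<lambda>n. (\<lambda>(m', c'). wstar Th b m' c') (u n)) = W"
    unfolding W_def ms_def cs_def by (auto simp: case_prod_beta)
  have "W \<longlonglongrightarrow> ws"
  proof (rule ccontr)
    assume "\<not> W \<longlonglongrightarrow> ws"
    then obtain e where e: "e > 0" "\<not> eventually (\<lambda>n. dist (W n) ws < e) sequentially"
      unfolding tendsto_iff by blast
    then have "infinite {n. dist (W n) ws \<ge> e}"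
      unfolding infinite_nat_iff_unbounded_le eventually_sequentially by (auto simp: not_less)
    then obtain r :: "nat \<Rightarrow> nat" where r: "strict_mono r" "\<forall>n. r n \<in> {n. dist (W n) ws \<ge> e}"
      using infinite_enumerate by blast
    have "\<forall>n. (W \<circ> r) n \<in> prob_simplex" using WS by simp
    then obtain l r2 where lr: "l \<in> prob_simplex" "strict_mono r2" "((W \<circ> r) \<circ> r2) \<longlonglongrightarrow> l"
      using seq_compactE[OF compact_imp_seq_compact[OF compact_simplex]] by metis
    define \<sigma> where "\<sigma> = r \<circ> r2"
    have sm: "strict_mono \<sigma>" unfolding \<sigma>_def using strict_mono_o r(1) lr(2) by blast
    have lW: "(W \<circ> \<sigma>) \<longlonglongrightarrow> l" using lr(3) unfolding \<sigma>_def by (simp add: o_assoc)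
    have lms: "(ms \<circ> \<sigma>) \<longlonglongrightarrow> mu" and lcs: "(cs \<circ> \<sigma>) \<longlonglongrightarrow> c"
      using LIMSEQ_subseq_LIMSEQ[OF lm sm] LIMSEQ_subseq_LIMSEQ[OF lc sm] by auto
    have "e \<le> dist l ws"
    proof (rule tendsto_lowerbound)
      show "((\<lambda>n. dist ((W \<circ> \<sigma>) n) ws) \<longlongrightarrow> dist l ws) sequentially"
        using lW by (intro tendsto_intros)
      show "eventually (\<lambda>n. e \<le> dist ((W \<circ> \<sigma>) n) ws) sequentially"
        using r(2) by (simp add: \<sigma>_def)
    qed simp
    then have lne: "l \<noteq> ws" using e(1) by auto
    have "l = ws"
    proof (cases "\<exists>j. j \<noteq> a")
      case False
      then have U: "UNIV = {a}" by auto
      have "v = (\<chi> i. 1)" if "v \<in> prob_simplex" for v :: "real^'a"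
      proof -
        have "(\<Sum>i\<in>UNIV. v$i) = (\<Sum>i\<in>{a}. v$i)" by (simp only: U)
        then have "v$a = 1" using that unfolding simplex_iff by simp
        then show ?thesis unfolding vec_eq_iff using U by auto
      qed
      then show ?thesis using lr(1) mx unfolding ismax_def by metis
    next
      case K2: True
      have evb: "eventually (\<lambda>n. unique_best ((ms \<circ> \<sigma>) n) a) sequentially"
        using ev_best[OF ub lms] .
      have wsp: "\<forall>i. ws$i > 0" using max_pos_w[OF ub mM cp K2 mx] by blast
      have "objective Th b mu c ws \<le> objective Th b mu c l"
      proof (rule dense_ge)
        fix t assume t: "objective Th b mu c l < t"
        show "objective Th b mu c ws \<le> t"
        proof (rule ccontr)
          assume "\<not> objective Th b mu c ws \<le> t"
          then have lt: "t < objective Th b mu c ws" by simp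
          have e1: "eventually (\<lambda>n. objective Th b ((ms \<circ> \<sigma>) n) ((cs \<circ> \<sigma>) n) ((W \<circ> \<sigma>) n) < t) sequentially"
            by (rule obj_usc[OF ub mM cp _ _ evb _ lms lcs lW t]) (use msM WS csp in auto)
          have e2: "eventually (\<lambda>n. t < objective Th b ((ms \<circ> \<sigma>) n) ((cs \<circ> \<sigma>) n) ws) sequentially"
            by (rule obj_lsc[OF ub mM cp K2 wsp _ _ evb lms lcs lt]) (use msM csp in auto)
          have "eventually (\<lambda>n. False) sequentially" using e1 e2
          proof eventually_elim
            case (elim n)
            have "objective Th b (ms (\<sigma> n)) (cs (\<sigma> n)) ws \<le> objective Th b (ms (\<sigma> n)) (cs (\<sigma> n)) (W (\<sigma> n))"
              using mxn[of "\<sigma> n"] mx unfolding ismax_def by blast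
            then show False using elim by simp
          qed
          then show False by simp
        qed
      qed
      then have "ismax mu c l" using mx lr(1) unfolding ismax_def by (meson order_trans)
      then show ?thesis using max_unique[OF ub mM cp K2 _ mx] by blast
    qed
    then show False using lne by blast
  qed
  then show "(\<lambda>n. (\<lambda>(m', c'). wstar Th b m' c') (u n)) \<longlonglongrightarrow> (\<lambda>(m', c'). wstar Th b m' c') (mu, c)"
    unfolding eq ws_def by simp
qed

end


theorem lemma3:
  fixes Th :: "real set" and b :: "real \<Rightarrow> real" and ell :: real
    and mu c :: "real^'k::finite"
  assumes "nef Th b"
    and "ell > 0"
    and "\<forall>a. mu $ a \<in> nef_means Th b"
    and "has_unique_best mu"
    and "\<forall>a. ell \<le> c $ a \<and> c $ a \<le> 1"
  shows "continuous (at (mu, c) within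
            {(m', c'). (\<forall>a. m' $ a \<in> nef_means Th b) \<and> has_unique_best m' \<and> (\<forall>a. 0 < c' $ a)})
          (\<lambda>(m', c'). wstar Th b m' c')"
proof -
  interpret nefl Th b by unfold_locales (rule assms(1))
  have cp: "\<forall>i. c$i > 0" using assms(2,5) by (meson less_le_trans)
  show ?thesis using main_cont[OF assms(3) assms(4) cp] .
qed

end
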